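(* Let $\Omega \subset \mathbb{R}^d$ be a bounded domain and let $\mu,\nu$ be Borel probability measures on $\Omega$. Then $$W_1(\mu,\nu) = \sup\left\{ \int_\Omega \phi \, \mathrm{d}(\mu - \nu) \;:\; \phi \in C(\Omega),\ \phi(x) - \phi(y) \leq |x-y| \text{ for all } (x,y) \in \operatorname{supp}(\mu) \times \operatorname{supp}(\nu) \right\}.$$
   Context: $C(\Omega)$ denotes the set of bounded continuous real-valued functions on $\Omega$. The 1-Wasserstein distance is $W_1(\mu,\nu) := \min\{ \int_{\Omega\times\Omega} |x-y| \,\mathrm{d}\gamma(x,y) : \gamma \in \Pi(\mu,\nu)\}$, where $\Pi(\mu,\nu)$ is the set of Borel probability measures $\gamma$ on $\Omega\times\Omega$ with $\gamma(A\times\Omega)=\mu(A)$ and $\gamma(\Omega\times A)=\nu(A)$ for all measurable $A\subset\Omega$. $|\cdot|$ is the Euclidean norm. The condition $\phi(x)-\phi(y)\le|x-y|$ on $\operatorname{supp}(\mu)\times\operatorname{supp}(\nu)$ is called the universal admissible condition. *)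

theory Defs
  imports "HOL-Probability.Probability"
begin

definition borel_prob_on :: "'a::topological_space set \<Rightarrow> 'a measure \<Rightarrow> bool" where
  "borel_prob_on \<Omega> M \<longleftrightarrow> prob_space M \<and> space M = \<Omega> \<and>
     sets M = sets (restrict_space borel \<Omega>)"

definition supp :: "'a::topological_space measure \<Rightarrow> 'a set" where
  "supp M = {x \<in> space M. \<forall>U. open U \<longrightarrow> x \<in> U \<longrightarrow> emeasure M (U \<inter> space M) > 0}"

definition couplings :: "'a::topological_space set \<Rightarrow> 'a measure \<Rightarrow> 'a measure \<Rightarrow> ('a \<times> 'a) measure set" where
  "couplings \<Omega> \<mu> \<nu> = {\<gamma>. borel_prob_on (\<Omega> \<times> \<Omega>) \<gamma> \<and>
     (\<forall>A \<in> sets (restrict_space borel \<Omega>).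
        emeasure \<gamma> (A \<times> \<Omega>) = emeasure \<mu> A \<and> emeasure \<gamma> (\<Omega> \<times> A) = emeasure \<nu> A)}"

text \<open>1-Wasserstein distance (the infimum, which the paper writes as a minimum).\<close>
definition W1 :: "'a::euclidean_space set \<Rightarrow> 'a measure \<Rightarrow> 'a measure \<Rightarrow> real" where
  "W1 \<Omega> \<mu> \<nu> = (INF \<gamma>\<in>couplings \<Omega> \<mu> \<nu>. \<integral>p. norm (fst p - snd p) \<partial>\<gamma>)"

definition Cb :: "'a::topological_space set \<Rightarrow> ('a \<Rightarrow> real) set" where
  "Cb \<Omega> = {\<phi>. continuous_on \<Omega> \<phi> \<and> bounded (\<phi> ` \<Omega>)}"

end

theory Submission
  imports Defs
begin

fun Fr :: "('i \<Rightarrow> 'a::metric_space) \<Rightarrow> ('i\<times>'i) list \<Rightarrow> 'a \<Rightarrow> real" where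
  "Fr a [] z = 0"
| "Fr a ((x,y)#R) z = Fr a R (a x) - dist (a x) (a y) + dist z (a y)"

fun Cl :: "'i \<Rightarrow> ('i\<times>'i) list \<Rightarrow> ('i\<times>'i) list" where
  "Cl w [] = []"
| "Cl w ((x,y)#R) = (w,y) # Cl x R"

lemma Fr_Cl:
  "Fr a R (a w) = sum_list (map (\<lambda>(i,j). dist (a i) (a j)) (Cl w R))
                 - sum_list (map (\<lambda>(i,j). dist (a i) (a j)) R)"
  by (induction R arbitrary: w) auto

lemma Fr_lip: "Fr a R z \<le> Fr a R z' + dist z z'"
proof (cases R)
  case (Cons q R')
  obtain x y where "q = (x,y)" by fastforce
  then show ?thesis using Cons dist_triangle[of z "a y" z'] by (simp add: dist_commute)
qed simp

lemma Cl_snd: "map snd (Cl w R) = map snd R"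
  by (induction R arbitrary: w) auto

lemma Cl_set: "set (Cl w R) \<subseteq> insert w (fst ` set R) \<times> snd ` set R"
  by (induction R arbitrary: w) force+

lemma Cl_fst:
  "R \<noteq> [] \<Longrightarrow> count_list (map fst (Cl w R)) i + (if i = fst (last R) then 1 else 0)
     = count_list (map fst R) i + (if i = w then 1 else 0)"
proof (induction R arbitrary: w)
  case Nil then show ?case by simp
next
  case (Cons q R)
  obtain x y where q: "q = (x,y)" by fastforce
  show ?case
  proof (cases "R = []")
    case True then show ?thesis using q by auto
  next
    case False
    from Cons.IH[OF False, of x] show ?thesis using q False by auto
  qed
qed

lemma count_rows:
  assumes "set L \<subseteq> I \<times> I" "finite I" "i \<in> I"
  shows "(\<Sum>j\<in>I. real (count_list L (i,j))) = real (count_list (map fst L) i)"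
  using assms
proof (induction L)
  case Nil then show ?case by simp
next
  case (Cons q L)
  obtain x y where q: "q = (x,y)" by fastforce
  have "(\<Sum>j\<in>I. real (count_list (q#L) (i,j))) =
        (\<Sum>j\<in>I. real (count_list L (i,j))) + (\<Sum>j\<in>I. if q = (i,j) then 1 else 0)"
    by (simp add: sum.distrib[symmetric]; intro sum.cong; auto)
  also have "(\<Sum>j\<in>I. if q = (i,j) then 1 else (0::real)) = (if x = i then 1 else 0)"
    using Cons.prems q by (auto simp: sum.delta)
  finally show ?case using Cons q by auto
qed

lemma count_cols:
  assumes "set L \<subseteq> I \<times> I" "finite I" "j \<in> I"
  shows "(\<Sum>i\<in>I. real (count_list L (i,j))) = real (count_list (map snd L) j)"
  using assms
proof (induction L)
  case Nil then show ?case by simp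
next
  case (Cons q L)
  obtain x y where q: "q = (x,y)" by fastforce
  have "(\<Sum>i\<in>I. real (count_list (q#L) (i,j))) =
        (\<Sum>i\<in>I. real (count_list L (i,j))) + (\<Sum>i\<in>I. if q = (i,j) then 1 else 0)"
    by (simp add: sum.distrib[symmetric]; intro sum.cong; auto)
  also have "(\<Sum>i\<in>I. if q = (i,j) then 1 else (0::real)) = (if y = j then 1 else 0)"
    using Cons.prems q by (auto simp: sum.delta)
  finally show ?case using Cons q by auto
qed


definition CM :: "('i \<Rightarrow> 'a::metric_space) \<Rightarrow> ('i\<times>'i) set \<Rightarrow> bool" where
  "CM a S \<longleftrightarrow> (\<forall>R. R \<noteq> [] \<longrightarrow> set R \<subseteq> S \<longrightarrow>
     sum_list (map (\<lambda>(i,j). dist (a i) (a j)) R)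
       \<le> sum_list (map (\<lambda>(i,j). dist (a i) (a j)) (Cl (fst (last R)) R)))"

lemma CM_potential:
  fixes a :: "'i \<Rightarrow> 'a::metric_space"
  assumes fin: "finite S" and cm: "CM a S"
  shows "\<exists>\<phi>. (\<forall>x y. \<phi> x - \<phi> y \<le> dist x y) \<and>
             (\<forall>(i,j)\<in>S. \<phi> (a i) - \<phi> (a j) = dist (a i) (a j))"
proof -
  define V where "V z = {Fr a R z | R. set R \<subseteq> S}" for z
  define \<phi> where "\<phi> z = Inf (V z)" for z
  have ne: "V z \<noteq> {}" for z unfolding V_def by (auto intro!: exI[of _ "[]"])
  have lb: "Fr a R z \<ge> - (\<Sum>q\<in>S. dist z (a (fst q)))" if "set R \<subseteq> S" for R z
  proof (cases "R = []")
    case True then show ?thesis by (simp add: sum_nonneg)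
  next
    case False
    define x0 where "x0 = fst (last R)"
    have "last R \<in> S" using False that by auto
    then have "dist z (a x0) \<le> (\<Sum>q\<in>S. dist z (a (fst q)))"
      unfolding x0_def by (intro member_le_sum[OF _ _ fin]) auto
    moreover have "Fr a R (a x0) \<ge> 0"
      using cm False that unfolding CM_def x0_def Fr_Cl by auto
    moreover have "Fr a R (a x0) \<le> Fr a R z + dist (a x0) z" by (rule Fr_lip)
    ultimately show ?thesis by (simp add: dist_commute)
  qed
  have bdd: "bdd_below (V z)" for z
    unfolding V_def bdd_below_def using lb by blast
  have le: "\<phi> z \<le> Fr a R z" if "set R \<subseteq> S" for R z
    unfolding \<phi>_def by (rule cInf_lower[OF _ bdd]) (use that V_def in auto)
  have lip: "\<phi> x - \<phi> y \<le> dist x y" for x y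
  proof -
    have "\<phi> x - dist x y \<le> \<phi> y"
      unfolding \<phi>_def[of y]
    proof (rule cInf_greatest[OF ne])
      fix v assume "v \<in> V y"
      then obtain R where R: "set R \<subseteq> S" "v = Fr a R y" unfolding V_def by auto
      show "\<phi> x - dist x y \<le> v" using le[OF R(1), of x] Fr_lip[of a R x y] R by simp
    qed
    then show ?thesis by simp
  qed
  have eq: "\<phi> (a i) - \<phi> (a j) = dist (a i) (a j)" if ij: "(i,j) \<in> S" for i j
  proof -
    have "\<phi> (a j) + dist (a i) (a j) \<le> \<phi> (a i)"
      unfolding \<phi>_def[of "a i"]
    proof (rule cInf_greatest[OF ne])
      fix v assume "v \<in> V (a i)"
      then obtain R where R: "set R \<subseteq> S" "v = Fr a R (a i)" unfolding V_def by auto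
      have "set ((i,j)#R) \<subseteq> S" using R ij by auto
      from le[OF this, of "a j"] R show "\<phi> (a j) + dist (a i) (a j) \<le> v" by simp
    qed
    with lip[of "a i" "a j"] show ?thesis by simp
  qed
  show ?thesis using lip eq by blast
qed


definition plan :: "'i set \<Rightarrow> ('i \<Rightarrow> real) \<Rightarrow> ('i \<Rightarrow> real) \<Rightarrow> ('i\<times>'i \<Rightarrow> real) \<Rightarrow> bool" where
  "plan I m1 m2 \<pi> \<longleftrightarrow> (\<forall>i\<in>I. \<forall>j\<in>I. \<pi> (i,j) \<ge> 0) \<and> (\<forall>i\<in>I. (\<Sum>j\<in>I. \<pi> (i,j)) = m1 i)
      \<and> (\<forall>j\<in>I. (\<Sum>i\<in>I. \<pi> (i,j)) = m2 j)"

definition tcost :: "('i \<Rightarrow> 'a::metric_space) \<Rightarrow> 'i set \<Rightarrow> ('i\<times>'i \<Rightarrow> real) \<Rightarrow> real" where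
  "tcost a I \<pi> = (\<Sum>q\<in>I\<times>I. \<pi> q * dist (a (fst q)) (a (snd q)))"

lemma sum_count_cost:
  assumes "set L \<subseteq> A" "finite A"
  shows "(\<Sum>q\<in>A. real (count_list L q) * c q) = sum_list (map c L)"
  using assms
proof (induction L)
  case Nil then show ?case by simp
next
  case (Cons x L)
  have "(\<Sum>q\<in>A. real (count_list (x#L) q) * c q) =
        (\<Sum>q\<in>A. real (count_list L q) * c q) + (\<Sum>q\<in>A. if x = q then c q else 0)"
    by (simp add: sum.distrib[symmetric]; intro sum.cong; auto simp: algebra_simps)
  also have "(\<Sum>q\<in>A. if x = q then c q else 0) = c x" using Cons.prems by (simp add: sum.delta)
  finally show ?case using Cons by simp
qed

lemma opt_CM:
  fixes a :: "'i \<Rightarrow> 'a::metric_space"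
  assumes fin: "finite I" and pl: "plan I m1 m2 \<pi>"
    and opt: "\<And>\<pi>'. plan I m1 m2 \<pi>' \<Longrightarrow> tcost a I \<pi> \<le> tcost a I \<pi>'"
  shows "CM a {q\<in>I\<times>I. \<pi> q > 0}"
  unfolding CM_def
proof (intro allI impI)
  fix R :: "('i\<times>'i) list"
  assume Rne: "R \<noteq> []" and RS: "set R \<subseteq> {q\<in>I\<times>I. \<pi> q > 0}"
  define c where "c = (\<lambda>(i,j). dist (a i) (a j))"
  define w where "w = fst (last R)"
  define B where "B = Cl w R"
  have wI: "w \<in> I" using Rne RS unfolding w_def by (metis (no_types, lifting) SigmaE fst_conv last_in_set mem_Collect_eq subset_iff)
  have RI: "set R \<subseteq> I \<times> I" using RS by auto
  have BI: "set B \<subseteq> I \<times> I" 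
  proof -
    have "insert w (fst ` set R) \<times> snd ` set R \<subseteq> I \<times> I" using RI wI by force
    then show ?thesis unfolding B_def using Cl_set[of w R] by blast
  qed
  define mn where "mn = Min (\<pi> ` set R)"
  have mnpos: "mn > 0" unfolding mn_def using Rne RS by (subst Min_gr_iff) auto
  have mnle: "mn \<le> \<pi> q" if "q \<in> set R" for q unfolding mn_def using that by auto
  define \<delta> where "\<delta> = mn / real (length R)"
  have lenpos: "real (length R) > 0" using Rne by simp
  have dpos: "\<delta> > 0" unfolding \<delta>_def using mnpos lenpos by simp
  define \<pi>' where "\<pi>' q = \<pi> q + \<delta> * (real (count_list B q) - real (count_list R q))" for q
  have "plan I m1 m2 \<pi>'"
    unfolding plan_def
  proof (intro conjI ballI)
    fix i j assume ij: "i \<in> I" "j \<in> I"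
    show "\<pi>' (i,j) \<ge> 0"
    proof (cases "(i,j) \<in> set R")
      case True
      have "\<delta> * real (count_list R (i,j)) \<le> \<delta> * real (length R)"
        using dpos count_le_length[of R "(i,j)"] by simp
      also have "\<dots> = mn" unfolding \<delta>_def using lenpos by simp
      also have "\<dots> \<le> \<pi> (i,j)" using mnle True by simp
      moreover have "\<delta> * real (count_list B (i,j)) \<ge> 0" using dpos by simp
      ultimately show ?thesis unfolding \<pi>'_def by (simp add: algebra_simps)
    next
      case False
      then have "count_list R (i,j) = 0" by (simp add: count_list_0_iff)
      then show ?thesis unfolding \<pi>'_def using pl ij dpos unfolding plan_def by simp
    qed
  next
    fix i assume i: "i \<in> I"
    have "(\<Sum>j\<in>I. \<pi>' (i,j)) = (\<Sum>j\<in>I. \<pi> (i,j)) + \<delta> * ((\<Sum>j\<in>I. real (count_list B (i,j)))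
            - (\<Sum>j\<in>I. real (count_list R (i,j))))"
      unfolding \<pi>'_def by (simp add: sum.distrib sum_subtractf sum_distrib_left algebra_simps)
    also have "\<dots> = m1 i + \<delta> * (real (count_list (map fst B) i) - real (count_list (map fst R) i))"
      using count_rows[OF BI fin i] count_rows[OF RI fin i] pl i unfolding plan_def by simp
    also have "real (count_list (map fst B) i) = real (count_list (map fst R) i)"
      using Cl_fst[OF Rne, of w i] unfolding B_def w_def by (auto split: if_splits)
    finally show "(\<Sum>j\<in>I. \<pi>' (i,j)) = m1 i" by simp
  next
    fix j assume j: "j \<in> I"
    have "(\<Sum>i\<in>I. \<pi>' (i,j)) = (\<Sum>i\<in>I. \<pi> (i,j)) + \<delta> * ((\<Sum>i\<in>I. real (count_list B (i,j)))
            - (\<Sum>i\<in>I. real (count_list R (i,j))))"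
      unfolding \<pi>'_def by (simp add: sum.distrib sum_subtractf sum_distrib_left algebra_simps)
    also have "\<dots> = m2 j + \<delta> * (real (count_list (map snd B) j) - real (count_list (map snd R) j))"
      using count_cols[OF BI fin j] count_cols[OF RI fin j] pl j unfolding plan_def by simp
    also have "map snd B = map snd R" unfolding B_def by (rule Cl_snd)
    finally show "(\<Sum>i\<in>I. \<pi>' (i,j)) = m2 j" by simp
  qed
  from opt[OF this] have "tcost a I \<pi> \<le> tcost a I \<pi>'" .
  moreover have "tcost a I \<pi>' = tcost a I \<pi> + \<delta> * (sum_list (map c B) - sum_list (map c R))"
  proof -
    have cc: "dist (a (fst q)) (a (snd q)) = c q" for q unfolding c_def by (cases q) auto
    have "tcost a I \<pi>' = tcost a I \<pi> + \<delta> * ((\<Sum>q\<in>I\<times>I. real (count_list B q) * c q)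
       - (\<Sum>q\<in>I\<times>I. real (count_list R q) * c q))"
      unfolding tcost_def \<pi>'_def cc
      by (simp add: sum.distrib sum_subtractf sum_distrib_left algebra_simps)
    also have "\<dots> = tcost a I \<pi> + \<delta> * (sum_list (map c B) - sum_list (map c R))"
      using sum_count_cost[OF BI, of c] sum_count_cost[OF RI, of c] fin by simp
    finally show ?thesis .
  qed
  ultimately have "sum_list (map c R) \<le> sum_list (map c B)"
    using dpos by (simp add: zero_le_mult_iff)
  then show "sum_list (map (\<lambda>(i,j). dist (a i) (a j)) R)
       \<le> sum_list (map (\<lambda>(i,j). dist (a i) (a j)) (Cl (fst (last R)) R))"
    unfolding c_def B_def w_def .
qed


lemma exists_opt:
  fixes a :: "'i \<Rightarrow> 'a::metric_space"
  assumes fin: "finite I" and nn: "\<And>i. i \<in> I \<Longrightarrow> m1 i \<ge> 0 \<and> m2 i \<ge> 0"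
    and s1: "(\<Sum>i\<in>I. m1 i) = 1" and s2: "(\<Sum>i\<in>I. m2 i) = 1"
  shows "\<exists>\<pi>. plan I m1 m2 \<pi> \<and> (\<forall>\<pi>'. plan I m1 m2 \<pi>' \<longrightarrow> tcost a I \<pi> \<le> tcost a I \<pi>')"
proof -
  define T where "T = product_topology (\<lambda>_. euclideanreal) (I\<times>I)"
  define K0 where "K0 = PiE (I\<times>I) (\<lambda>_. {0..1::real})"
  define C where "C = (\<Inter>i\<in>I. {\<pi> \<in> topspace T. (\<Sum>j\<in>I. \<pi> (i,j)) \<in> {m1 i}})
                    \<inter> (\<Inter>j\<in>I. {\<pi> \<in> topspace T. (\<Sum>i\<in>I. \<pi> (i,j)) \<in> {m2 j}})"
  have proj: "continuous_map T euclideanreal (\<lambda>\<pi>. \<pi> q)" if "q \<in> I\<times>I" for q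
    unfolding T_def using continuous_map_product_projection[OF that, of "\<lambda>_. euclideanreal"] by simp
  have cK0: "compactin T K0" unfolding T_def K0_def by (subst compactin_PiE) auto
  have cC: "closedin T C"
  proof -
    have "closedin T {\<pi> \<in> topspace T. (\<Sum>j\<in>I. \<pi> (i,j)) \<in> {m1 i}}" if "i \<in> I" for i
      by (rule closedin_continuous_map_preimage) (auto intro!: continuous_map_sum proj fin that)
    moreover have "closedin T {\<pi> \<in> topspace T. (\<Sum>i\<in>I. \<pi> (i,j)) \<in> {m2 j}}" if "j \<in> I" for j
      by (rule closedin_continuous_map_preimage) (auto intro!: continuous_map_sum proj fin that)
    ultimately show ?thesis unfolding C_def
      using s1 by (cases "I = {}") (auto intro!: closedin_Int closedin_Inter)
  qed
  define K where "K = C \<inter> K0"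
  have cK: "compactin T K" unfolding K_def by (rule closed_Int_compactin[OF cC cK0])
  have ccost: "continuous_map T euclideanreal (tcost a I)"
    unfolding tcost_def by (auto intro!: continuous_map_sum continuous_map_real_mult proj fin)
  have "compactin euclideanreal (tcost a I ` K)" by (rule image_compactin[OF cK ccost])
  then have cimg: "compact (tcost a I ` K)" by simp
  define p0 where "p0 = restrict (\<lambda>(i,j). m1 i * m2 j) (I\<times>I)"
  have le1: "m1 i \<le> 1 \<and> m2 i \<le> 1" if "i \<in> I" for i
  proof -
    have "m1 i \<le> (\<Sum>i\<in>I. m1 i)" by (rule member_le_sum[OF that]) (use nn fin in auto)
    moreover have "m2 i \<le> (\<Sum>i\<in>I. m2 i)" by (rule member_le_sum[OF that]) (use nn fin in auto)
    ultimately show ?thesis using s1 s2 by simp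
  qed
  have plK: "\<pi> \<in> K \<longleftrightarrow> \<pi> \<in> K0 \<and> plan I m1 m2 \<pi>" for \<pi>
    unfolding K_def C_def K0_def plan_def T_def by (auto simp: PiE_iff)
  have "p0 \<in> K0" unfolding K0_def p0_def using nn le1 by (auto simp: mult_le_one)
  moreover have "plan I m1 m2 p0" unfolding plan_def p0_def
    using nn by (auto simp: sum_distrib_left[symmetric] sum_distrib_right[symmetric] s1 s2)
  ultimately have "p0 \<in> K" using plK by simp
  then have "tcost a I ` K \<noteq> {}" by auto
  from compact_attains_inf[OF cimg this] obtain \<pi> where pK: "\<pi> \<in> K"
    and min: "\<And>\<pi>'. \<pi>' \<in> K \<Longrightarrow> tcost a I \<pi> \<le> tcost a I \<pi>'" by auto
  show ?thesis
  proof (intro exI conjI allI impI)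
    show "plan I m1 m2 \<pi>" using pK plK by simp
    fix \<pi>' assume pl': "plan I m1 m2 \<pi>'"
    define \<pi>'' where "\<pi>'' = restrict \<pi>' (I\<times>I)"
    have "plan I m1 m2 \<pi>''" using pl' unfolding plan_def \<pi>''_def by auto
    moreover have "\<pi>'' \<in> K0"
    proof -
      have "\<pi>' (i,j) \<le> 1" if "i \<in> I" "j \<in> I" for i j
      proof -
        have "\<pi>' (i,j) \<le> (\<Sum>j\<in>I. \<pi>' (i,j))"
          by (rule member_le_sum[OF that(2)]) (use pl' that fin in \<open>auto simp: plan_def\<close>)
        then show ?thesis using pl' that le1 unfolding plan_def by fastforce
      qed
      then show ?thesis using pl' unfolding K0_def \<pi>''_def plan_def by auto
    qed
    ultimately have "\<pi>'' \<in> K" using plK by simp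
    from min[OF this] show "tcost a I \<pi> \<le> tcost a I \<pi>'"
      unfolding tcost_def \<pi>''_def by simp
  qed
qed


lemma finite_KR:
  fixes a :: "'i \<Rightarrow> 'a::metric_space"
  assumes fin: "finite I" and nn: "\<And>i. i \<in> I \<Longrightarrow> m1 i \<ge> 0 \<and> m2 i \<ge> 0"
    and s1: "(\<Sum>i\<in>I. m1 i) = 1" and s2: "(\<Sum>i\<in>I. m2 i) = 1"
  shows "\<exists>\<pi> \<phi>. plan I m1 m2 \<pi> \<and> (\<forall>x y. \<phi> x - \<phi> y \<le> dist x y) \<and>
     tcost a I \<pi> = (\<Sum>i\<in>I. m1 i * \<phi> (a i)) - (\<Sum>j\<in>I. m2 j * \<phi> (a j))"
proof -
  obtain \<pi> where pl: "plan I m1 m2 \<pi>" and opt: "\<And>\<pi>'. plan I m1 m2 \<pi>' \<Longrightarrow> tcost a I \<pi> \<le> tcost a I \<pi>'"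
    using exists_opt[OF fin nn s1 s2, of a] by blast
  define S where "S = {q\<in>I\<times>I. \<pi> q > 0}"
  have "CM a S" unfolding S_def by (rule opt_CM[OF fin pl opt])
  moreover have "finite S" unfolding S_def using fin by auto
  ultimately obtain \<phi> where lip: "\<forall>x y. \<phi> x - \<phi> y \<le> dist x y"
    and eq: "\<forall>(i,j)\<in>S. \<phi> (a i) - \<phi> (a j) = dist (a i) (a j)" using CM_potential by blast
  have "tcost a I \<pi> = (\<Sum>q\<in>I\<times>I. \<pi> q * (\<phi> (a (fst q)) - \<phi> (a (snd q))))"
    unfolding tcost_def
  proof (rule sum.cong[OF refl])
    fix q assume q: "q \<in> I\<times>I"
    obtain i j where ij: "q = (i,j)" by fastforce
    show "\<pi> q * dist (a (fst q)) (a (snd q)) = \<pi> q * (\<phi> (a (fst q)) - \<phi> (a (snd q)))"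
    proof (cases "\<pi> q > 0")
      case True then have "q \<in> S" using q S_def by auto
      then show ?thesis using eq ij by auto
    next
      case False then have "\<pi> q = 0" using pl q ij unfolding plan_def by force
      then show ?thesis by simp
    qed
  qed
  also have "\<dots> = (\<Sum>i\<in>I. \<Sum>j\<in>I. \<pi> (i,j) * \<phi> (a i)) - (\<Sum>i\<in>I. \<Sum>j\<in>I. \<pi> (i,j) * \<phi> (a j))"
    by (simp add: sum.cartesian_product right_diff_distrib sum_subtractf split_beta)
  also have "(\<Sum>i\<in>I. \<Sum>j\<in>I. \<pi> (i,j) * \<phi> (a i)) = (\<Sum>i\<in>I. m1 i * \<phi> (a i))"
    using pl unfolding plan_def by (simp add: sum_distrib_right[symmetric])
  also have "(\<Sum>i\<in>I. \<Sum>j\<in>I. \<pi> (i,j) * \<phi> (a j)) = (\<Sum>j\<in>I. m2 j * \<phi> (a j))"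
    using pl unfolding plan_def by (subst sum.swap) (simp add: sum_distrib_right[symmetric])
  finally show ?thesis using pl lip by blast
qed


lemma sets_pair_restrict:
  fixes \<Omega> :: "'a::euclidean_space set"
  assumes "\<Omega> \<in> sets borel"
  shows "sets (restrict_space borel \<Omega> \<Otimes>\<^sub>M restrict_space borel \<Omega>) = sets (restrict_space borel (\<Omega> \<times> \<Omega>))"
proof -
  let ?R = "restrict_space borel \<Omega>" and ?Q = "restrict_space borel (\<Omega>\<times>\<Omega>)"
  have sp: "space (?R \<Otimes>\<^sub>M ?R) = space ?Q" by (simp add: space_pair_measure space_restrict_space)
  have fb: "fst \<in> measurable (borel :: ('a\<times>'a) measure) borel"
    using measurable_fst[of "borel::'a measure" "borel::'a measure"] by (simp add: borel_prod)
  have sb: "snd \<in> measurable (borel :: ('a\<times>'a) measure) borel"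
    using measurable_snd[of "borel::'a measure" "borel::'a measure"] by (simp add: borel_prod)
  have m1: "id \<in> measurable (?R \<Otimes>\<^sub>M ?R) ?Q"
  proof (rule measurable_restrict_space2)
    show "id \<in> space (?R \<Otimes>\<^sub>M ?R) \<rightarrow> \<Omega> \<times> \<Omega>" by (simp add: space_pair_measure space_restrict_space)
    have "id \<in> measurable (?R \<Otimes>\<^sub>M ?R) (borel \<Otimes>\<^sub>M borel)"
      unfolding measurable_pair_iff
      by (auto intro!: measurable_restrict_space1 measurable_compose[OF measurable_fst]
          measurable_compose[OF measurable_snd] simp: o_def)
    then show "id \<in> measurable (?R \<Otimes>\<^sub>M ?R) borel" by (simp add: borel_prod)
  qed
  have m2: "id \<in> measurable ?Q (?R \<Otimes>\<^sub>M ?R)"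
    unfolding measurable_pair_iff
  proof
    show "fst \<circ> id \<in> measurable ?Q ?R"
      by (rule measurable_restrict_space2) (auto simp: space_restrict_space intro!: measurable_restrict_space1 fb)
    show "snd \<circ> id \<in> measurable ?Q ?R"
      by (rule measurable_restrict_space2) (auto simp: space_restrict_space intro!: measurable_restrict_space1 sb)
  qed
  show ?thesis
  proof (intro equalityI subsetI)
    fix A assume "A \<in> sets (?R \<Otimes>\<^sub>M ?R)"
    from measurable_sets[OF m2 this] sets.sets_into_space[OF this] sp
    show "A \<in> sets ?Q" by (metis Int_absorb2 id_apply vimage_id)
  next
    fix A assume "A \<in> sets ?Q"
    from measurable_sets[OF m1 this] sets.sets_into_space[OF this] sp
    show "A \<in> sets (?R \<Otimes>\<^sub>M ?R)" by (metis Int_absorb2 id_apply vimage_id)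
  qed
qed

lemma supp_null:
  fixes M :: "'a::euclidean_space measure"
  assumes "borel_prob_on \<Omega> M"
  shows "\<Omega> - supp M \<in> null_sets M"
proof -
  have sp: "space M = \<Omega>" and ss: "sets M = sets (restrict_space borel \<Omega>)"
    using assms unfolding borel_prob_on_def by auto
  obtain B :: "'a set set" where cB: "countable B" and tB: "topological_basis B"
    using ex_countable_basis by blast
  define B0 where "B0 = {b \<in> B. emeasure M (b \<inter> \<Omega>) = 0}"
  have opn: "b \<inter> \<Omega> \<in> sets M" if "open b" for b
    unfolding ss sets_restrict_space using that by auto
  have eq: "\<Omega> - supp M = (\<Union>b\<in>B0. b \<inter> \<Omega>)"
  proof (intro equalityI subsetI)
    fix x assume x: "x \<in> \<Omega> - supp M"
    then obtain U where U: "open U" "x \<in> U" "\<not> emeasure M (U \<inter> \<Omega>) > 0"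
      unfolding supp_def sp by auto
    obtain b where b: "b \<in> B" "x \<in> b" "b \<subseteq> U" using topological_basisE[OF tB U(1,2)] by blast
    have "emeasure M (b \<inter> \<Omega>) \<le> emeasure M (U \<inter> \<Omega>)"
      using b(3) opn U(1) by (intro emeasure_mono) auto
    then have "emeasure M (b \<inter> \<Omega>) = 0" using U(3) by (simp add: not_gr_zero)
    then show "x \<in> (\<Union>b\<in>B0. b \<inter> \<Omega>)" using b x B0_def by auto
  next
    fix x assume "x \<in> (\<Union>b\<in>B0. b \<inter> \<Omega>)"
    then obtain b where b: "b \<in> B" "emeasure M (b \<inter> \<Omega>) = 0" "x \<in> b" "x \<in> \<Omega>" unfolding B0_def by auto
    then have "open b" using topological_basis_open[OF tB] by auto
    then show "x \<in> \<Omega> - supp M" using b unfolding supp_def sp by auto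
  qed
  have "(\<Union>b\<in>B0. b \<inter> \<Omega>) \<in> null_sets M"
  proof (rule null_sets_UN')
    show "countable B0" using cB unfolding B0_def by auto
    fix b assume "b \<in> B0"
    then show "b \<inter> \<Omega> \<in> null_sets M" using opn topological_basis_open[OF tB] unfolding B0_def
      by (auto simp: null_sets_def)
  qed
  then show ?thesis using eq by simp
qed


lemma integrable_bdd:
  fixes f :: "'b \<Rightarrow> real"
  assumes "finite_measure M" "f \<in> borel_measurable M" "\<And>x. x \<in> space M \<Longrightarrow> \<bar>f x\<bar> \<le> B"
  shows "integrable M f"
  using finite_measure.integrable_const_bound[OF assms(1), of f B] assms(2,3) by (auto intro!: AE_I2)

lemma fst_meas:
  fixes \<Omega> :: "'a::euclidean_space set"
  shows "fst \<in> measurable (restrict_space borel (\<Omega>\<times>\<Omega>)) (restrict_space borel \<Omega>)"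
    and "snd \<in> measurable (restrict_space borel (\<Omega>\<times>\<Omega>)) (restrict_space borel \<Omega>)"
proof -
  have fb: "fst \<in> measurable (borel :: ('a\<times>'a) measure) borel"
    using measurable_fst[of "borel::'a measure" "borel::'a measure"] by (simp add: borel_prod)
  have sb: "snd \<in> measurable (borel :: ('a\<times>'a) measure) borel"
    using measurable_snd[of "borel::'a measure" "borel::'a measure"] by (simp add: borel_prod)
  show "fst \<in> measurable (restrict_space borel (\<Omega>\<times>\<Omega>)) (restrict_space borel \<Omega>)"
    by (rule measurable_restrict_space2) (auto simp: space_restrict_space intro!: measurable_restrict_space1 fb)
  show "snd \<in> measurable (restrict_space borel (\<Omega>\<times>\<Omega>)) (restrict_space borel \<Omega>)"
    by (rule measurable_restrict_space2) (auto simp: space_restrict_space intro!: measurable_restrict_space1 sb)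
qed

lemma coupling_ineq:
  fixes \<Omega> :: "'a::euclidean_space set"
  assumes bd: "bounded \<Omega>" and mu: "borel_prob_on \<Omega> \<mu>" and nu: "borel_prob_on \<Omega> \<nu>"
    and g: "\<gamma> \<in> couplings \<Omega> \<mu> \<nu>" and phi: "\<phi> \<in> Cb \<Omega>"
    and adm: "\<forall>x\<in>supp \<mu>. \<forall>y\<in>supp \<nu>. \<phi> x - \<phi> y \<le> norm (x - y)"
  shows "(\<integral>x. \<phi> x \<partial>\<mu>) - (\<integral>x. \<phi> x \<partial>\<nu>) \<le> (\<integral>p. norm (fst p - snd p) \<partial>\<gamma>)"
proof -
  let ?R = "restrict_space borel \<Omega>"
  have gb: "borel_prob_on (\<Omega>\<times>\<Omega>) \<gamma>" and marg: "\<And>A. A \<in> sets ?R \<Longrightarrow>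
        emeasure \<gamma> (A \<times> \<Omega>) = emeasure \<mu> A \<and> emeasure \<gamma> (\<Omega> \<times> A) = emeasure \<nu> A"
    using g unfolding couplings_def by auto
  have sg: "sets \<gamma> = sets (restrict_space borel (\<Omega>\<times>\<Omega>))" and spg: "space \<gamma> = \<Omega>\<times>\<Omega>"
    and pg: "prob_space \<gamma>" using gb unfolding borel_prob_on_def by auto
  have smu: "sets \<mu> = sets ?R" "space \<mu> = \<Omega>" "prob_space \<mu>" using mu unfolding borel_prob_on_def by auto
  have snu: "sets \<nu> = sets ?R" "space \<nu> = \<Omega>" "prob_space \<nu>" using nu unfolding borel_prob_on_def by auto
  have fm: "fst \<in> measurable \<gamma> ?R" "snd \<in> measurable \<gamma> ?R"
    using fst_meas[of \<Omega>] by (simp_all add: measurable_cong_sets[OF sg refl])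
  have sub: "A \<subseteq> \<Omega>" if "A \<in> sets ?R" for A using that sets.sets_into_space[OF that] by (simp add: space_restrict_space)
  have dmu: "distr \<gamma> ?R fst = \<mu>"
  proof (rule measure_eqI)
    show "sets (distr \<gamma> ?R fst) = sets \<mu>" using smu by simp
    fix A assume "A \<in> sets (distr \<gamma> ?R fst)"
    then have A: "A \<in> sets ?R" by simp
    have "fst -` A \<inter> space \<gamma> = A \<times> \<Omega>" using sub[OF A] spg by auto
    then show "emeasure (distr \<gamma> ?R fst) A = emeasure \<mu> A"
      using emeasure_distr[OF fm(1) A] marg[OF A] by simp
  qed
  have dnu: "distr \<gamma> ?R snd = \<nu>"
  proof (rule measure_eqI)
    show "sets (distr \<gamma> ?R snd) = sets \<nu>" using snu by simp
    fix A assume "A \<in> sets (distr \<gamma> ?R snd)"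
    then have A: "A \<in> sets ?R" by simp
    have "snd -` A \<inter> space \<gamma> = \<Omega> \<times> A" using sub[OF A] spg by auto
    then show "emeasure (distr \<gamma> ?R snd) A = emeasure \<nu> A"
      using emeasure_distr[OF fm(2) A] marg[OF A] by simp
  qed
  have cphi: "continuous_on \<Omega> \<phi>" and bphi: "bounded (\<phi> ` \<Omega>)" using phi unfolding Cb_def by auto
  obtain B where B: "\<And>x. x \<in> \<Omega> \<Longrightarrow> \<bar>\<phi> x\<bar> \<le> B"
    using bphi unfolding bounded_iff by auto
  obtain D where D: "\<And>x. x \<in> \<Omega> \<Longrightarrow> norm x \<le> D" using bd unfolding bounded_iff by auto
  have mphi: "\<phi> \<in> borel_measurable ?R" by (rule borel_measurable_continuous_on_restrict[OF cphi])
  have i1: "(\<integral>x. \<phi> x \<partial>\<mu>) = (\<integral>p. \<phi> (fst p) \<partial>\<gamma>)"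
    using integral_distr[OF fm(1) mphi] dmu by simp
  have i2: "(\<integral>x. \<phi> x \<partial>\<nu>) = (\<integral>p. \<phi> (snd p) \<partial>\<gamma>)"
    using integral_distr[OF fm(2) mphi] dnu by simp
  have fmg: "finite_measure \<gamma>" using pg by (simp add: prob_space.finite_measure)
  have int1: "integrable \<gamma> (\<lambda>p. \<phi> (fst p))"
    by (rule integrable_bdd[OF fmg, where B=B]) (auto intro: measurable_compose[OF fm(1) mphi] B simp: spg)
  have int2: "integrable \<gamma> (\<lambda>p. \<phi> (snd p))"
    by (rule integrable_bdd[OF fmg, where B=B]) (auto intro: measurable_compose[OF fm(2) mphi] B simp: spg)
  have mn: "(\<lambda>p. norm (fst p - snd p)) \<in> borel_measurable \<gamma>"
  proof -
    have "continuous_on (\<Omega>\<times>\<Omega>) (\<lambda>p::'a\<times>'a. norm (fst p - snd p))" by (intro continuous_intros)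
    from borel_measurable_continuous_on_restrict[OF this] show ?thesis
      by (simp add: measurable_cong_sets[OF sg refl])
  qed
  have int3: "integrable \<gamma> (\<lambda>p. norm (fst p - snd p))"
  proof (rule integrable_bdd[OF fmg mn, where B="2*D"])
    fix p assume "p \<in> space \<gamma>"
    then have "p \<in> \<Omega> \<times> \<Omega>" by (simp only: spg)
    then have "fst p \<in> \<Omega>" "snd p \<in> \<Omega>" by (simp_all only: mem_Times_iff)
    then have "norm (fst p) \<le> D" "norm (snd p) \<le> D" using D by blast+
    then show "\<bar>norm (fst p - snd p)\<bar> \<le> 2*D" using norm_triangle_ineq4[of "fst p" "snd p"] by simp
  qed
  have N1: "(\<Omega> - supp \<mu>) \<times> \<Omega> \<in> null_sets \<gamma>"
  proof -
    have A: "\<Omega> - supp \<mu> \<in> sets ?R" and z: "emeasure \<mu> (\<Omega> - supp \<mu>) = 0"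
      using supp_null[OF mu] smu by auto
    have "fst -` (\<Omega> - supp \<mu>) \<inter> space \<gamma> = (\<Omega> - supp \<mu>) \<times> \<Omega>" using spg by auto
    then have "(\<Omega> - supp \<mu>) \<times> \<Omega> \<in> sets \<gamma>" using measurable_sets[OF fm(1) A] by simp
    then show ?thesis using marg[OF A] z by (simp add: null_sets_def)
  qed
  have N2: "\<Omega> \<times> (\<Omega> - supp \<nu>) \<in> null_sets \<gamma>"
  proof -
    have A: "\<Omega> - supp \<nu> \<in> sets ?R" and z: "emeasure \<nu> (\<Omega> - supp \<nu>) = 0"
      using supp_null[OF nu] snu by auto
    have "snd -` (\<Omega> - supp \<nu>) \<inter> space \<gamma> = \<Omega> \<times> (\<Omega> - supp \<nu>)" using spg by auto
    then have "\<Omega> \<times> (\<Omega> - supp \<nu>) \<in> sets \<gamma>" using measurable_sets[OF fm(2) A] by simp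
    then show ?thesis using marg[OF A] z by (simp add: null_sets_def)
  qed
  have "AE p in \<gamma>. \<phi> (fst p) - \<phi> (snd p) \<le> norm (fst p - snd p)"
  proof (rule AE_I')
    show "(\<Omega> - supp \<mu>) \<times> \<Omega> \<union> \<Omega> \<times> (\<Omega> - supp \<nu>) \<in> null_sets \<gamma>" using N1 N2 by auto
    show "{p \<in> space \<gamma>. \<not> \<phi> (fst p) - \<phi> (snd p) \<le> norm (fst p - snd p)}
          \<subseteq> (\<Omega> - supp \<mu>) \<times> \<Omega> \<union> \<Omega> \<times> (\<Omega> - supp \<nu>)"
      using adm spg by auto
  qed
  then have "(\<integral>p. \<phi> (fst p) - \<phi> (snd p) \<partial>\<gamma>) \<le> (\<integral>p. norm (fst p - snd p) \<partial>\<gamma>)"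
    by (intro integral_mono_AE int3 Bochner_Integration.integrable_diff int1 int2)
  then show ?thesis using i1 i2 Bochner_Integration.integral_diff[OF int1 int2] by simp
qed


lemma cells:
  fixes \<Omega> :: "'a::euclidean_space set"
  assumes bd: "bounded \<Omega>" and eta: "\<eta> > 0"
  shows "\<exists>cell :: 'a \<Rightarrow> ('a \<Rightarrow> int). finite (cell ` \<Omega>) \<and> (\<forall>k. {x. cell x = k} \<in> sets borel)
           \<and> (\<forall>x y. cell x = cell y \<longrightarrow> norm (x - y) < \<eta>)"
proof -
  define h where "h = \<eta> / real DIM('a)"
  have h: "h > 0" unfolding h_def using eta by simp
  define cell where "cell x = restrict (\<lambda>b. \<lfloor>x \<bullet> b / h\<rfloor>) Basis" for x :: 'a
  have ceq: "cell x = k \<longleftrightarrow> k \<in> extensional Basis \<and> (\<forall>b\<in>Basis. \<lfloor>x \<bullet> b / h\<rfloor> = k b)" for x k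
    unfolding cell_def by (auto simp: fun_eq_iff extensional_def)
  have meas: "{x. cell x = k} \<in> sets borel" for k
  proof (cases "k \<in> extensional Basis")
    case True
    then have "{x. cell x = k} = {x. \<forall>b\<in>Basis. \<lfloor>x \<bullet> b / h\<rfloor> = k b}" using ceq by auto
    also have "\<dots> \<in> sets borel" by measurable
    finally show ?thesis .
  next
    case False
    then have "{x. cell x = k} = {}" using ceq by auto
    then show ?thesis by simp
  qed
  have diam: "norm (x - y) < \<eta>" if "cell x = cell y" for x y
  proof -
    have "\<bar>(x - y) \<bullet> b\<bar> < h" if b: "b \<in> Basis" for b
    proof -
      have fl: "\<lfloor>x \<bullet> b / h\<rfloor> = \<lfloor>y \<bullet> b / h\<rfloor>"
        using \<open>cell x = cell y\<close> b unfolding cell_def by (metis restrict_apply')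
      have "\<bar>x \<bullet> b / h - y \<bullet> b / h\<bar> < 1"
      proof -
        have "of_int \<lfloor>x \<bullet> b / h\<rfloor> \<le> x \<bullet> b / h" "x \<bullet> b / h < of_int \<lfloor>x \<bullet> b / h\<rfloor> + 1"
             "of_int \<lfloor>y \<bullet> b / h\<rfloor> \<le> y \<bullet> b / h" "y \<bullet> b / h < of_int \<lfloor>y \<bullet> b / h\<rfloor> + 1"
          using floor_correct[of "x \<bullet> b / h"] floor_correct[of "y \<bullet> b / h"] by simp_all
        then show ?thesis using fl by linarith
      qed
      then have "\<bar>x \<bullet> b - y \<bullet> b\<bar> < h" using h
        by (simp add: diff_divide_distrib[symmetric] abs_divide pos_divide_less_eq)
      then show ?thesis by (simp add: inner_diff_left)
    qed
    then have "(\<Sum>b\<in>Basis. \<bar>(x - y) \<bullet> b\<bar>) < (\<Sum>b\<in>(Basis::'a set). h)"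
      by (intro sum_strict_mono) auto
    also have "\<dots> = \<eta>" unfolding h_def by simp
    finally show ?thesis using norm_le_l1[of "x - y"] by simp
  qed
  obtain D where D: "\<And>x. x \<in> \<Omega> \<Longrightarrow> norm x \<le> D" using bd unfolding bounded_iff by auto
  define N where "N = \<lceil>D / h\<rceil>"
  have "cell ` \<Omega> \<subseteq> PiE Basis (\<lambda>_. {-N..N})"
  proof
    fix k assume "k \<in> cell ` \<Omega>"
    then obtain x where x: "x \<in> \<Omega>" "k = cell x" by auto
    have "\<lfloor>x \<bullet> b / h\<rfloor> \<in> {-N..N}" if b: "b \<in> Basis" for b
    proof -
      have "\<bar>x \<bullet> b\<bar> \<le> D" using Basis_le_norm[OF b, of x] D[OF x(1)] by simp
      then have r: "\<bar>x \<bullet> b / h\<bar> \<le> D / h" using h by (simp add: abs_divide divide_right_mono)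
      have "D / h \<le> of_int N" unfolding N_def by simp
      then have "-of_int N \<le> x \<bullet> b / h" "x \<bullet> b / h \<le> of_int N" using r by linarith+
      then have "-N \<le> \<lfloor>x \<bullet> b / h\<rfloor>" "\<lfloor>x \<bullet> b / h\<rfloor> \<le> N"
        by (simp_all add: le_floor_iff floor_le_iff)
      then show ?thesis by simp
    qed
    then show "k \<in> PiE Basis (\<lambda>_. {-N..N})" using x unfolding cell_def by auto
  qed
  then have "finite (cell ` \<Omega>)" by (rule finite_subset) (auto intro!: finite_PiE)
  then show ?thesis using meas diam by blast
qed


lemma indicator_partition:
  assumes "finite I" "disjoint_family_on A I" "i \<in> I" "x \<in> A i"
  shows "(\<Sum>j\<in>I. L j * (indicator (A j) x :: real)) = L i"
proof -
  have "(\<Sum>j\<in>I. L j * (indicator (A j) x :: real)) = (\<Sum>j\<in>I. if j = i then L i else 0)"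
  proof (rule sum.cong[OF refl])
    fix j assume j: "j \<in> I"
    show "L j * indicator (A j) x = (if j = i then L i else 0)"
    proof (cases "j = i")
      case False
      then have "x \<notin> A j" using assms(2,4) j assms(3) unfolding disjoint_family_on_def by blast
      then show ?thesis using False by simp
    qed (use assms in simp)
  qed
  also have "\<dots> = L i" using assms by simp
  finally show ?thesis .
qed

lemma part_integral_lower:
  fixes M :: "'b measure" and f :: "'b \<Rightarrow> real"
  assumes fm: "finite_measure M" and fin: "finite I" and As: "\<And>i. i \<in> I \<Longrightarrow> A i \<in> sets M"
    and disj: "disjoint_family_on A I" and cov: "(\<Union>i\<in>I. A i) = space M"
    and int: "integrable M f" and lo: "\<And>i x. i \<in> I \<Longrightarrow> x \<in> A i \<Longrightarrow> L i \<le> f x"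
  shows "(\<Sum>i\<in>I. measure M (A i) * L i) \<le> (\<integral>x. f x \<partial>M)"
proof -
  define g where "g x = (\<Sum>i\<in>I. L i * indicator (A i) x)" for x
  have ii: "integrable M (\<lambda>x. L i * (indicator (A i) x :: real))" if "i \<in> I" for i
    using As[OF that] finite_measure.emeasure_finite[OF fm, of "A i"] by (auto simp: less_top)
  have gi: "integrable M g" unfolding g_def using ii by (intro Bochner_Integration.integrable_sum) auto
  have "(\<integral>x. g x \<partial>M) = (\<Sum>i\<in>I. L i * measure M (A i))"
    unfolding g_def using ii As sets.sets_into_space[OF As]
    by (subst Bochner_Integration.integral_sum) (auto simp: Int_absorb2)
  moreover have "(\<integral>x. g x \<partial>M) \<le> (\<integral>x. f x \<partial>M)"
  proof (rule integral_mono[OF gi int])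
    fix x assume "x \<in> space M"
    then obtain i where i: "i \<in> I" "x \<in> A i" using cov by auto
    show "g x \<le> f x" unfolding g_def indicator_partition[OF fin disj i] using lo[OF i] .
  qed
  ultimately show ?thesis by (simp add: mult.commute)
qed

lemma part_integral_upper:
  fixes M :: "'b measure" and f :: "'b \<Rightarrow> real"
  assumes fm: "finite_measure M" and fin: "finite I" and As: "\<And>i. i \<in> I \<Longrightarrow> A i \<in> sets M"
    and disj: "disjoint_family_on A I" and cov: "(\<Union>i\<in>I. A i) = space M"
    and int: "integrable M f" and up: "\<And>i x. i \<in> I \<Longrightarrow> x \<in> A i \<Longrightarrow> f x \<le> U i"
  shows "(\<integral>x. f x \<partial>M) \<le> (\<Sum>i\<in>I. measure M (A i) * U i)"
proof -
  have "(\<Sum>i\<in>I. measure M (A i) * - U i) \<le> (\<integral>x. - f x \<partial>M)"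
    by (rule part_integral_lower[OF fm fin As disj cov]) (use int up in auto)
  then show ?thesis by (simp add: sum_negf)
qed


lemma coupling_construct:
  fixes \<Omega> :: "'a::euclidean_space set" and A :: "'i \<Rightarrow> 'a set"
  assumes \<Omega>b: "\<Omega> \<in> sets borel" and mu: "borel_prob_on \<Omega> \<mu>" and nu: "borel_prob_on \<Omega> \<nu>"
    and fin: "finite I" and Ai: "\<And>i. i \<in> I \<Longrightarrow> A i \<in> sets (restrict_space borel \<Omega>)"
    and disj: "disjoint_family_on A I" and cov: "(\<Union>i\<in>I. A i) = \<Omega>"
    and pl: "plan I (\<lambda>i. measure \<mu> (A i)) (\<lambda>i. measure \<nu> (A i)) \<pi>"
    and Cbd: "\<And>i j x y. i \<in> I \<Longrightarrow> j \<in> I \<Longrightarrow> x \<in> A i \<Longrightarrow> y \<in> A j \<Longrightarrow> norm (x - y) \<le> C (i,j)"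
  shows "\<exists>\<gamma>\<in>couplings \<Omega> \<mu> \<nu>. (\<integral>p. norm (fst p - snd p) \<partial>\<gamma>) \<le> (\<Sum>q\<in>I\<times>I. \<pi> q * C q)"
proof -
  let ?R = "restrict_space borel \<Omega>"
  have smu: "sets \<mu> = sets ?R" "space \<mu> = \<Omega>" "prob_space \<mu>" using mu unfolding borel_prob_on_def by auto
  have snu: "sets \<nu> = sets ?R" "space \<nu> = \<Omega>" "prob_space \<nu>" using nu unfolding borel_prob_on_def by auto
  interpret mu: prob_space \<mu> by fact
  interpret nu: prob_space \<nu> by fact
  interpret P: pair_prob_space \<mu> \<nu> by unfold_locales
  define P where "P = \<mu> \<Otimes>\<^sub>M \<nu>"
  have sP: "sets P = sets (restrict_space borel (\<Omega>\<times>\<Omega>))"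
    unfolding P_def using sets_pair_restrict[OF \<Omega>b] by (simp add: sets_pair_measure_cong[OF smu(1) snu(1)])
  have spP: "space P = \<Omega>\<times>\<Omega>" unfolding P_def by (simp add: space_pair_measure smu snu)
  have fmP: "finite_measure P" unfolding P_def by (simp add: P.finite_measure_axioms)
  define m1 where "m1 i = measure \<mu> (A i)" for i
  define m2 where "m2 i = measure \<nu> (A i)" for i
  have Amu: "A i \<in> sets \<mu>" "A i \<in> sets \<nu>" if "i \<in> I" for i using Ai[OF that] smu snu by auto
  have Asub: "A i \<subseteq> \<Omega>" if "i \<in> I" for i using cov that by auto
  have measP: "measure P (X \<times> Y) = measure \<mu> X * measure \<nu> Y" if "X \<in> sets \<mu>" "Y \<in> sets \<nu>" for X Y
    unfolding P_def using nu.emeasure_pair_measure_Times[OF that]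
    by (simp add: measure_def enn2real_mult)
  have setP: "X \<times> Y \<in> sets P" if "X \<in> sets \<mu>" "Y \<in> sets \<nu>" for X Y
    unfolding P_def using that by simp
  have pnn: "\<pi> (i,j) \<ge> 0" if "i \<in> I" "j \<in> I" for i j using pl that unfolding plan_def by auto
  have row: "(\<Sum>j\<in>I. \<pi> (i,j)) = m1 i" if "i \<in> I" for i using pl that unfolding plan_def m1_def by auto
  have col: "(\<Sum>i\<in>I. \<pi> (i,j)) = m2 j" if "j \<in> I" for j using pl that unfolding plan_def m2_def by auto
  have ple1: "\<pi> (i,j) \<le> m1 i" if "i \<in> I" "j \<in> I" for i j
    using member_le_sum[of j I "\<lambda>j. \<pi> (i,j)"] that fin pnn row by auto
  have ple2: "\<pi> (i,j) \<le> m2 j" if "i \<in> I" "j \<in> I" for i j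
    using member_le_sum[of i I "\<lambda>i. \<pi> (i,j)"] that fin pnn col by auto
  define c where "c q = \<pi> q / (m1 (fst q) * m2 (snd q))" for q
  have cnn: "c q \<ge> 0" if "q \<in> I\<times>I" for q
    using that pnn unfolding c_def m1_def m2_def by (auto intro!: divide_nonneg_nonneg)
  have key: "c (i,j) * (m1 i * m2 j) = \<pi> (i,j)" if "i \<in> I" "j \<in> I" for i j
  proof (cases "m1 i = 0 \<or> m2 j = 0")
    case True
    then have "\<pi> (i,j) = 0" using ple1[OF that] ple2[OF that] pnn[OF that] by auto
    then show ?thesis unfolding c_def by simp
  next
    case False then show ?thesis unfolding c_def by simp
  qed
  define g where "g p = (\<Sum>q\<in>I\<times>I. c q * indicator (A (fst q) \<times> A (snd q)) p)" for p
  have gnn: "g p \<ge> 0" for p unfolding g_def using cnn by (auto intro!: sum_nonneg)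
  have indm: "(\<lambda>p. indicator (A (fst q) \<times> A (snd q)) p :: real) \<in> borel_measurable P" if "q \<in> I\<times>I" for q
    using that Amu by (intro borel_measurable_indicator setP) auto
  have gm: "g \<in> borel_measurable P" unfolding g_def using indm
    by (intro borel_measurable_sum borel_measurable_times) auto
  define \<gamma> where "\<gamma> = density P (\<lambda>p. ennreal (g p))"
  have sg: "sets \<gamma> = sets (restrict_space borel (\<Omega>\<times>\<Omega>))" unfolding \<gamma>_def using sP by simp
  have spg: "space \<gamma> = \<Omega>\<times>\<Omega>" unfolding \<gamma>_def using spP by simp
  have ii: "integrable P (\<lambda>p. indicator S p :: real)" if "S \<in> sets P" for S
    using that finite_measure.emeasure_finite[OF fmP, of S] by (auto simp: less_top)
  have emg: "emeasure \<gamma> S = ennreal (\<integral>p. g p * indicator S p \<partial>P)" if S: "S \<in> sets P" for S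
  proof -
    have "emeasure \<gamma> S = (\<integral>\<^sup>+ p. ennreal (g p) * indicator S p \<partial>P)"
      unfolding \<gamma>_def using emeasure_density[of "\<lambda>p. ennreal (g p)" P S] gm S by simp
    also have "\<dots> = (\<integral>\<^sup>+ p. ennreal (g p * indicator S p) \<partial>P)"
      by (intro nn_integral_cong) (auto split: split_indicator)
    also have "\<dots> = ennreal (\<integral>p. g p * indicator S p \<partial>P)"
    proof (rule nn_integral_eq_integral)
      show "integrable P (\<lambda>p. g p * indicator S p)"
        unfolding g_def sum_distrib_right
      proof (intro Bochner_Integration.integrable_sum)
        fix q assume q: "q \<in> I\<times>I"
        have "(A (fst q) \<times> A (snd q)) \<inter> S \<in> sets P" using q S Amu setP by auto
        from ii[OF this] show "integrable P (\<lambda>p. c q * indicator (A (fst q) \<times> A (snd q)) p * indicator S p)"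
          by (simp add: mult.assoc indicator_inter_arith)
      qed
      show "AE x in P. 0 \<le> g x * indicator S x" using gnn by auto
    qed
    finally show ?thesis .
  qed
  have inP: "(A' \<inter> A i) \<times> A j \<in> sets P" "A i \<times> (A' \<inter> A j) \<in> sets P"
    if "A' \<in> sets ?R" "i \<in> I" "j \<in> I" for A' i j
    using that Amu smu snu by (auto intro!: setP)
  have ind_int: "integrable P (\<lambda>p. c q * indicator X p)" if "X \<in> sets P" for q X
    using ii[OF that] by simp
  have marg1: "emeasure \<gamma> (A' \<times> \<Omega>) = emeasure \<mu> A'" if A': "A' \<in> sets ?R" for A'
  proof -
    have A'm: "A' \<in> sets \<mu>" using A' smu by simp
    have "A' \<times> \<Omega> \<in> sets P" using A'm setP[of A' \<Omega>] snu sets.top[of \<nu>] by simp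
    then have "emeasure \<gamma> (A' \<times> \<Omega>) = ennreal (\<integral>p. g p * indicator (A' \<times> \<Omega>) p \<partial>P)" by (rule emg)
    also have "(\<integral>p. g p * indicator (A' \<times> \<Omega>) p \<partial>P)
       = (\<integral>p. (\<Sum>q\<in>I\<times>I. c q * indicator ((A' \<inter> A (fst q)) \<times> A (snd q)) p) \<partial>P)"
    proof (rule Bochner_Integration.integral_cong[OF refl])
      fix p assume "p \<in> space P"
      show "g p * indicator (A' \<times> \<Omega>) p = (\<Sum>q\<in>I\<times>I. c q * indicator ((A' \<inter> A (fst q)) \<times> A (snd q)) p)"
        unfolding g_def sum_distrib_right
        by (intro sum.cong refl) (use Asub in \<open>fastforce split: split_indicator\<close>)
    qed
    also have "\<dots> = (\<Sum>q\<in>I\<times>I. c q * measure P ((A' \<inter> A (fst q)) \<times> A (snd q)))"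
    proof -
      have int: "\<And>q. q \<in> I\<times>I \<Longrightarrow> integrable P (\<lambda>p. c q * indicator ((A' \<inter> A (fst q)) \<times> A (snd q)) p)"
        using ii inP(1)[OF A'] by auto
      have sub: "\<And>q. q \<in> I\<times>I \<Longrightarrow> (A' \<inter> A (fst q)) \<times> A (snd q) \<inter> space P = (A' \<inter> A (fst q)) \<times> A (snd q)"
        using sets.sets_into_space[OF inP(1)[OF A']] by fastforce
      show ?thesis
        by (subst Bochner_Integration.integral_sum[OF int]) (auto intro!: sum.cong simp: integral_indicator sub)
    qed
    also have "\<dots> = (\<Sum>q\<in>I\<times>I. c q * (measure \<mu> (A' \<inter> A (fst q)) * m2 (snd q)))"
      using A'm Amu by (intro sum.cong refl) (auto simp: measP m2_def)
    also have "\<dots> = (\<Sum>i\<in>I. \<Sum>j\<in>I. c (i,j) * (measure \<mu> (A' \<inter> A i) * m2 j))"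
      by (simp add: sum.cartesian_product split_beta)
    also have "\<dots> = (\<Sum>i\<in>I. measure \<mu> (A' \<inter> A i))"
    proof (rule sum.cong[OF refl])
      fix i assume i: "i \<in> I"
      define x where "x = measure \<mu> (A' \<inter> A i)"
      have xle: "x \<le> m1 i" unfolding x_def m1_def using Amu[OF i]
        by (intro mu.finite_measure_mono) auto
      show "(\<Sum>j\<in>I. c (i,j) * (measure \<mu> (A' \<inter> A i) * m2 j)) = measure \<mu> (A' \<inter> A i)"
        unfolding x_def[symmetric]
      proof (cases "m1 i = 0")
        case True
        then have "x = 0" using xle by (simp add: x_def measure_nonneg antisym)
        then show "(\<Sum>j\<in>I. c (i,j) * (x * m2 j)) = x" by simp
      next
        case False
        have "(\<Sum>j\<in>I. c (i,j) * (x * m2 j)) = (\<Sum>j\<in>I. \<pi> (i,j) * x / m1 i)"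
        proof (rule sum.cong[OF refl])
          fix j assume j: "j \<in> I"
          show "c (i,j) * (x * m2 j) = \<pi> (i,j) * x / m1 i"
            using key[OF i j] False by (simp add: field_simps)
        qed
        also have "\<dots> = x" using row[OF i] False by (simp add: sum_divide_distrib[symmetric] sum_distrib_right[symmetric])
        finally show "(\<Sum>j\<in>I. c (i,j) * (x * m2 j)) = x" .
      qed
    qed
    also have "\<dots> = measure \<mu> (\<Union>i\<in>I. A' \<inter> A i)"
    proof (rule mu.finite_measure_finite_Union[symmetric, OF fin])
      show "(\<lambda>i. A' \<inter> A i) ` I \<subseteq> sets \<mu>" using A'm Amu by auto
      show "disjoint_family_on (\<lambda>i. A' \<inter> A i) I" using disj unfolding disjoint_family_on_def by blast
    qed
    also have "(\<Union>i\<in>I. A' \<inter> A i) = A'" using cov sets.sets_into_space[OF A'm] smu by auto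
    finally show ?thesis by (simp add: mu.emeasure_eq_measure)
  qed
  have marg2: "emeasure \<gamma> (\<Omega> \<times> A') = emeasure \<nu> A'" if A': "A' \<in> sets ?R" for A'
  proof -
    have A'm: "A' \<in> sets \<nu>" using A' snu by simp
    have "\<Omega> \<times> A' \<in> sets P" using A'm setP[of \<Omega> A'] smu sets.top[of \<mu>] by simp
    then have "emeasure \<gamma> (\<Omega> \<times> A') = ennreal (\<integral>p. g p * indicator (\<Omega> \<times> A') p \<partial>P)" by (rule emg)
    also have "(\<integral>p. g p * indicator (\<Omega> \<times> A') p \<partial>P)
       = (\<integral>p. (\<Sum>q\<in>I\<times>I. c q * indicator (A (fst q) \<times> (A' \<inter> A (snd q))) p) \<partial>P)"
    proof (rule Bochner_Integration.integral_cong[OF refl])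
      fix p assume "p \<in> space P"
      show "g p * indicator (\<Omega> \<times> A') p = (\<Sum>q\<in>I\<times>I. c q * indicator (A (fst q) \<times> (A' \<inter> A (snd q))) p)"
        unfolding g_def sum_distrib_right
        by (intro sum.cong refl) (use Asub in \<open>fastforce split: split_indicator\<close>)
    qed
    also have "\<dots> = (\<Sum>q\<in>I\<times>I. c q * measure P (A (fst q) \<times> (A' \<inter> A (snd q))))"
    proof -
      have int: "\<And>q. q \<in> I\<times>I \<Longrightarrow> integrable P (\<lambda>p. c q * indicator (A (fst q) \<times> (A' \<inter> A (snd q))) p)"
        using ii inP(2)[OF A'] by auto
      have sub: "\<And>q. q \<in> I\<times>I \<Longrightarrow> A (fst q) \<times> (A' \<inter> A (snd q)) \<inter> space P = A (fst q) \<times> (A' \<inter> A (snd q))"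
        using sets.sets_into_space[OF inP(2)[OF A']] by fastforce
      show ?thesis
        by (subst Bochner_Integration.integral_sum[OF int]) (auto intro!: sum.cong simp: integral_indicator sub)
    qed
    also have "\<dots> = (\<Sum>q\<in>I\<times>I. c q * (m1 (fst q) * measure \<nu> (A' \<inter> A (snd q))))"
      using A'm Amu by (intro sum.cong refl) (auto simp: measP m1_def)
    also have "\<dots> = (\<Sum>j\<in>I. \<Sum>i\<in>I. c (i,j) * (m1 i * measure \<nu> (A' \<inter> A j)))"
      by (subst sum.swap) (simp add: sum.cartesian_product split_beta)
    also have "\<dots> = (\<Sum>j\<in>I. measure \<nu> (A' \<inter> A j))"
    proof (rule sum.cong[OF refl])
      fix j assume j: "j \<in> I"
      define x where "x = measure \<nu> (A' \<inter> A j)"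
      have xle: "x \<le> m2 j" unfolding x_def m2_def using Amu[OF j]
        by (intro nu.finite_measure_mono) auto
      show "(\<Sum>i\<in>I. c (i,j) * (m1 i * measure \<nu> (A' \<inter> A j))) = measure \<nu> (A' \<inter> A j)"
        unfolding x_def[symmetric]
      proof (cases "m2 j = 0")
        case True
        then have "x = 0" using xle by (simp add: x_def measure_nonneg antisym)
        then show "(\<Sum>i\<in>I. c (i,j) * (m1 i * x)) = x" by simp
      next
        case False
        have "(\<Sum>i\<in>I. c (i,j) * (m1 i * x)) = (\<Sum>i\<in>I. \<pi> (i,j) * x / m2 j)"
        proof (rule sum.cong[OF refl])
          fix i assume i: "i \<in> I"
          show "c (i,j) * (m1 i * x) = \<pi> (i,j) * x / m2 j"
            using key[OF i j] False by (simp add: field_simps)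
        qed
        also have "\<dots> = x" using col[OF j] False by (simp add: sum_divide_distrib[symmetric] sum_distrib_right[symmetric])
        finally show "(\<Sum>i\<in>I. c (i,j) * (m1 i * x)) = x" .
      qed
    qed
    also have "\<dots> = measure \<nu> (\<Union>i\<in>I. A' \<inter> A i)"
    proof (rule nu.finite_measure_finite_Union[symmetric, OF fin])
      show "(\<lambda>i. A' \<inter> A i) ` I \<subseteq> sets \<nu>" using A'm Amu by auto
      show "disjoint_family_on (\<lambda>i. A' \<inter> A i) I" using disj unfolding disjoint_family_on_def by blast
    qed
    also have "(\<Union>i\<in>I. A' \<inter> A i) = A'" using cov sets.sets_into_space[OF A'm] snu by auto
    finally show ?thesis by (simp add: nu.emeasure_eq_measure)
  qed
  have \<Omega>R: "\<Omega> \<in> sets ?R" using sets.top[of ?R] by (simp add: space_restrict_space)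
  have gc: "\<gamma> \<in> couplings \<Omega> \<mu> \<nu>"
    unfolding couplings_def borel_prob_on_def
  proof (intro CollectI conjI ballI)
    show "prob_space \<gamma>"
    proof
      show "emeasure \<gamma> (space \<gamma>) = 1" using marg1[OF \<Omega>R] spg mu.emeasure_space_1 smu by simp
    qed
  qed (use marg1 marg2 spg sg in auto)
  define n where "n p = norm (fst p - snd p)" for p :: "'a \<times> 'a"
  have nm: "n \<in> borel_measurable P"
  proof -
    have "continuous_on (\<Omega>\<times>\<Omega>) n" unfolding n_def by (intro continuous_intros)
    from borel_measurable_continuous_on_restrict[OF this] show ?thesis
      by (simp add: measurable_cong_sets[OF sP refl])
  qed
  define G where "G p = (\<Sum>q\<in>I\<times>I. c q * indicator (A (fst q) \<times> A (snd q)) p * C q)" for p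
  have Gi: "integrable P G" unfolding G_def
  proof (intro Bochner_Integration.integrable_sum)
    fix q assume q: "q \<in> I\<times>I"
    have "A (fst q) \<times> A (snd q) \<in> sets P" using q Amu setP by auto
    from ii[OF this] show "integrable P (\<lambda>p. c q * indicator (A (fst q) \<times> A (snd q)) p * C q)" by simp
  qed
  have pw: "g p * n p \<le> G p" for p
    unfolding g_def G_def sum_distrib_right
  proof (rule sum_mono)
    fix q assume q: "q \<in> I\<times>I"
    show "c q * indicator (A (fst q) \<times> A (snd q)) p * n p \<le> c q * indicator (A (fst q) \<times> A (snd q)) p * C q"
    proof (cases "p \<in> A (fst q) \<times> A (snd q)")
      case True
      then have "n p \<le> C q" unfolding n_def using Cbd[of "fst q" "snd q" "fst p" "snd p"] q by auto
      then show ?thesis using True cnn[OF q] by (simp add: mult_left_mono)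
    qed simp
  qed
  have gnint: "integrable P (\<lambda>p. g p * n p)"
  proof (rule Bochner_Integration.integrable_bound[OF Gi])
    show "(\<lambda>p. g p * n p) \<in> borel_measurable P" using gm nm by measurable
    show "AE p in P. norm (g p * n p) \<le> norm (G p)"
    proof (rule AE_I2)
      fix p
      have "0 \<le> g p * n p" using gnn[of p] unfolding n_def by simp
      then show "norm (g p * n p) \<le> norm (G p)" using pw[of p] by simp
    qed
  qed
  have "(\<integral>p. norm (fst p - snd p) \<partial>\<gamma>) = (\<integral>p. g p * n p \<partial>P)"
    unfolding \<gamma>_def n_def[symmetric] using integral_density[OF nm gm] gnn by simp
  also have "\<dots> \<le> (\<integral>p. G p \<partial>P)" by (rule integral_mono[OF gnint Gi pw])
  also have "(\<integral>p. G p \<partial>P) = (\<Sum>q\<in>I\<times>I. c q * measure P (A (fst q) \<times> A (snd q)) * C q)"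
  proof -
    have int: "\<And>q. q \<in> I\<times>I \<Longrightarrow> integrable P (\<lambda>p. c q * indicator (A (fst q) \<times> A (snd q)) p * C q)"
      using ii setP Amu by auto
    have sub: "\<And>q. q \<in> I\<times>I \<Longrightarrow> A (fst q) \<times> A (snd q) \<inter> space P = A (fst q) \<times> A (snd q)"
      using spP Asub by fastforce
    show ?thesis unfolding G_def
      by (subst Bochner_Integration.integral_sum[OF int]) (auto intro!: sum.cong simp: integral_indicator sub)
  qed
  also have "\<dots> = (\<Sum>q\<in>I\<times>I. \<pi> q * C q)"
  proof (rule sum.cong[OF refl])
    fix q assume q: "q \<in> I\<times>I"
    then obtain i j where ij: "q = (i,j)" "i \<in> I" "j \<in> I" by auto
    show "c q * measure P (A (fst q) \<times> A (snd q)) * C q = \<pi> q * C q"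
      using key[OF ij(2,3)] ij measP Amu by (simp add: m1_def m2_def)
  qed
  finally show ?thesis using gc by blast
qed


lemma approx:
  fixes \<Omega> :: "'a::euclidean_space set"
  assumes \<Omega>b: "\<Omega> \<in> sets borel" and bd: "bounded \<Omega>" and mu: "borel_prob_on \<Omega> \<mu>"
    and nu: "borel_prob_on \<Omega> \<nu>" and eps: "\<epsilon> > 0"
  shows "\<exists>\<gamma>\<in>couplings \<Omega> \<mu> \<nu>. \<exists>\<phi>\<in>Cb \<Omega>. (\<forall>x y. \<phi> x - \<phi> y \<le> norm (x - y)) \<and>
           (\<integral>p. norm (fst p - snd p) \<partial>\<gamma>) \<le> ((\<integral>x. \<phi> x \<partial>\<mu>) - (\<integral>x. \<phi> x \<partial>\<nu>)) + \<epsilon>"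
proof -
  let ?R = "restrict_space borel \<Omega>"
  have smu: "sets \<mu> = sets ?R" "space \<mu> = \<Omega>" "prob_space \<mu>" using mu unfolding borel_prob_on_def by auto
  have snu: "sets \<nu> = sets ?R" "space \<nu> = \<Omega>" "prob_space \<nu>" using nu unfolding borel_prob_on_def by auto
  interpret mu: prob_space \<mu> by fact
  interpret nu: prob_space \<nu> by fact
  define \<eta> where "\<eta> = \<epsilon> / 4"
  have eta: "\<eta> > 0" unfolding \<eta>_def using eps by simp
  obtain cell :: "'a \<Rightarrow> ('a \<Rightarrow> int)" where fin: "finite (cell ` \<Omega>)"
    and cm: "\<And>k. {x. cell x = k} \<in> sets borel"
    and cd: "\<And>x y. cell x = cell y \<Longrightarrow> norm (x - y) < \<eta>"
    using cells[OF bd eta] by blast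
  define I where "I = cell ` \<Omega>"
  define A where "A k = \<Omega> \<inter> {x. cell x = k}" for k
  have AR: "A k \<in> sets ?R" for k
    unfolding A_def using \<Omega>b cm[of k] by (subst sets_restrict_space_iff) auto
  have Amu: "A k \<in> sets \<mu>" "A k \<in> sets \<nu>" for k using AR smu snu by auto
  have disj: "disjoint_family_on A I" unfolding disjoint_family_on_def A_def by auto
  have cov: "(\<Union>k\<in>I. A k) = \<Omega>" unfolding A_def I_def by auto
  define a where "a k = (SOME x. x \<in> A k)" for k
  have aA: "a k \<in> A k" if "k \<in> I" for k
  proof -
    have "\<exists>x. x \<in> A k" using that unfolding I_def A_def by auto
    then show ?thesis unfolding a_def by (rule someI_ex)
  qed
  have close: "dist x (a k) < \<eta>" if "k \<in> I" "x \<in> A k" for k x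
    using cd[of x "a k"] aA[OF that(1)] that(2) unfolding A_def by (simp add: dist_norm)
  define m1 where "m1 k = measure \<mu> (A k)" for k
  define m2 where "m2 k = measure \<nu> (A k)" for k
  have finI: "finite I" using fin I_def by simp
  have s1: "(\<Sum>k\<in>I. m1 k) = 1"
  proof -
    have "(\<Sum>k\<in>I. m1 k) = measure \<mu> (\<Union>k\<in>I. A k)" unfolding m1_def
      using Amu disj by (intro mu.finite_measure_finite_Union[symmetric, OF finI]) auto
    then show ?thesis using cov smu mu.prob_space by simp
  qed
  have s2: "(\<Sum>k\<in>I. m2 k) = 1"
  proof -
    have "(\<Sum>k\<in>I. m2 k) = measure \<nu> (\<Union>k\<in>I. A k)" unfolding m2_def
      using Amu disj by (intro nu.finite_measure_finite_Union[symmetric, OF finI]) auto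
    then show ?thesis using cov snu nu.prob_space by simp
  qed
  have nn: "m1 k \<ge> 0 \<and> m2 k \<ge> 0" for k unfolding m1_def m2_def by simp
  obtain \<pi> \<phi> where pl: "plan I m1 m2 \<pi>" and lip: "\<forall>x y. \<phi> x - \<phi> y \<le> dist x y"
    and tc: "tcost a I \<pi> = (\<Sum>i\<in>I. m1 i * \<phi> (a i)) - (\<Sum>j\<in>I. m2 j * \<phi> (a j))"
    using finite_KR[OF finI _ s1 s2, of a] nn by blast
  have Cbd: "norm (x - y) \<le> dist (a i) (a j) + 2 * \<eta>"
    if "i \<in> I" "j \<in> I" "x \<in> A i" "y \<in> A j" for i j x y
  proof -
    have "dist x y \<le> dist x (a i) + dist (a i) (a j) + dist (a j) y"
      using dist_triangle[of x y "a i"] dist_triangle[of "a i" y "a j"] by simp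
    moreover have "dist x (a i) < \<eta>" "dist (a j) y < \<eta>"
      using close[OF that(1,3)] close[OF that(2,4)] by (auto simp: dist_commute)
    ultimately show ?thesis by (simp add: dist_norm)
  qed
  obtain \<gamma> where gc: "\<gamma> \<in> couplings \<Omega> \<mu> \<nu>"
    and cost: "(\<integral>p. norm (fst p - snd p) \<partial>\<gamma>) \<le> (\<Sum>q\<in>I\<times>I. \<pi> q * (dist (a (fst q)) (a (snd q)) + 2 * \<eta>))"
    using coupling_construct[OF \<Omega>b mu nu finI AR disj cov, of \<pi> "\<lambda>q. dist (a (fst q)) (a (snd q)) + 2 * \<eta>"]
      pl Cbd unfolding m1_def m2_def by auto
  have sumpi: "(\<Sum>q\<in>I\<times>I. \<pi> q) = 1"
  proof -
    have "(\<Sum>q\<in>I\<times>I. \<pi> q) = (\<Sum>i\<in>I. \<Sum>j\<in>I. \<pi> (i,j))"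
      by (simp add: sum.cartesian_product split_beta)
    also have "\<dots> = (\<Sum>i\<in>I. m1 i)" using pl unfolding plan_def by simp
    finally show ?thesis using s1 by simp
  qed
  have cost2: "(\<integral>p. norm (fst p - snd p) \<partial>\<gamma>) \<le> tcost a I \<pi> + 2 * \<eta>"
    using cost sumpi unfolding tcost_def by (simp add: distrib_left sum.distrib sum_distrib_right[symmetric])
  have lip2: "dist (\<phi> x) (\<phi> y) \<le> 1 * dist x y" for x y
    using lip[rule_format, of x y] lip[rule_format, of y x] by (simp add: dist_real_def dist_commute)
  have cphi: "continuous_on \<Omega> \<phi>"
    by (rule lipschitz_on_continuous_on[of 1]) (auto intro: lipschitz_onI lip2)
  obtain D where D: "\<And>x. x \<in> \<Omega> \<Longrightarrow> norm x \<le> D" using bd unfolding bounded_iff by auto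
  have phib: "\<bar>\<phi> x\<bar> \<le> \<bar>\<phi> 0\<bar> + D" if "x \<in> \<Omega>" for x
    using lip2[of x 0] D[OF that] by (simp add: dist_real_def)
  have phiC: "\<phi> \<in> Cb \<Omega>" unfolding Cb_def
    using cphi phib by (auto simp: bounded_iff intro!: exI[of _ "\<bar>\<phi> 0\<bar> + D"])
  have mphi: "\<phi> \<in> borel_measurable ?R" by (rule borel_measurable_continuous_on_restrict[OF cphi])
  have imu: "integrable \<mu> \<phi>"
    by (rule integrable_bdd[OF mu.finite_measure_axioms _ phib])
       (use mphi smu in \<open>auto simp: measurable_cong_sets[OF smu(1) refl]\<close>)
  have inu: "integrable \<nu> \<phi>"
    by (rule integrable_bdd[OF nu.finite_measure_axioms _ phib])
       (use mphi snu in \<open>auto simp: measurable_cong_sets[OF snu(1) refl]\<close>)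
  have low: "(\<Sum>i\<in>I. m1 i * (\<phi> (a i) - \<eta>)) \<le> (\<integral>x. \<phi> x \<partial>\<mu>)"
    unfolding m1_def
  proof (rule part_integral_lower[OF mu.finite_measure_axioms finI _ disj _ imu])
    show "(\<Union>i\<in>I. A i) = space \<mu>" using cov smu by simp
    fix i x assume "i \<in> I" "x \<in> A i"
    then show "\<phi> (a i) - \<eta> \<le> \<phi> x" using close[of i x] lip[rule_format, of "a i" x] by (simp add: dist_commute)
  qed (use Amu in auto)
  have up: "(\<integral>x. \<phi> x \<partial>\<nu>) \<le> (\<Sum>i\<in>I. m2 i * (\<phi> (a i) + \<eta>))"
    unfolding m2_def
  proof (rule part_integral_upper[OF nu.finite_measure_axioms finI _ disj _ inu])
    show "(\<Union>i\<in>I. A i) = space \<nu>" using cov snu by simp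
    fix i x assume "i \<in> I" "x \<in> A i"
    then show "\<phi> x \<le> \<phi> (a i) + \<eta>" using close[of i x] lip[rule_format, of x "a i"] by simp
  qed (use Amu in auto)
  have "(\<Sum>i\<in>I. m1 i * (\<phi> (a i) - \<eta>)) = (\<Sum>i\<in>I. m1 i * \<phi> (a i)) - \<eta>"
    using s1 by (simp add: right_diff_distrib sum_subtractf sum_distrib_right[symmetric])
  moreover have "(\<Sum>i\<in>I. m2 i * (\<phi> (a i) + \<eta>)) = (\<Sum>i\<in>I. m2 i * \<phi> (a i)) + \<eta>"
    using s2 by (simp add: distrib_left sum.distrib sum_distrib_right[symmetric])
  ultimately have "tcost a I \<pi> - 2 * \<eta> \<le> (\<integral>x. \<phi> x \<partial>\<mu>) - (\<integral>x. \<phi> x \<partial>\<nu>)"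
    using low up tc by linarith
  then have "(\<integral>p. norm (fst p - snd p) \<partial>\<gamma>) \<le> ((\<integral>x. \<phi> x \<partial>\<mu>) - (\<integral>x. \<phi> x \<partial>\<nu>)) + \<epsilon>"
    using cost2 unfolding \<eta>_def by linarith
  moreover have "\<forall>x y. \<phi> x - \<phi> y \<le> norm (x - y)" using lip by (simp add: dist_norm)
  ultimately show ?thesis using gc phiC by blast
qed


theorem theorem1:
  fixes \<Omega> :: "'a::euclidean_space set" and \<mu> \<nu> :: "'a measure"
  assumes "open \<Omega>" and "connected \<Omega>" and "\<Omega> \<noteq> {}" and "bounded \<Omega>"
    and "borel_prob_on \<Omega> \<mu>" and "borel_prob_on \<Omega> \<nu>"
  shows "W1 \<Omega> \<mu> \<nu> = Sup {(\<integral>x. \<phi> x \<partial>\<mu>) - (\<integral>x. \<phi> x \<partial>\<nu>) | \<phi>.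
           \<phi> \<in> Cb \<Omega> \<and> (\<forall>x\<in>supp \<mu>. \<forall>y\<in>supp \<nu>. \<phi> x - \<phi> y \<le> norm (x - y))}"
proof -
  note op = assms(1) and bd = assms(4) and mu = assms(5) and nu = assms(6)
  have \<Omega>b: "\<Omega> \<in> sets borel" using op by simp
  define S where "S = {(\<integral>x. \<phi> x \<partial>\<mu>) - (\<integral>x. \<phi> x \<partial>\<nu>) | \<phi>.
           \<phi> \<in> Cb \<Omega> \<and> (\<forall>x\<in>supp \<mu>. \<forall>y\<in>supp \<nu>. \<phi> x - \<phi> y \<le> norm (x - y))}"
  define cost where "cost \<gamma> = (\<integral>p. norm (fst p - snd p) \<partial>\<gamma>)" for \<gamma> :: "('a \<times> 'a) measure"
  have W: "W1 \<Omega> \<mu> \<nu> = (INF \<gamma>\<in>couplings \<Omega> \<mu> \<nu>. cost \<gamma>)" unfolding W1_def cost_def ..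
  have up: "s \<le> cost \<gamma>" if "s \<in> S" "\<gamma> \<in> couplings \<Omega> \<mu> \<nu>" for s \<gamma>
    using that coupling_ineq[OF bd mu nu] unfolding S_def cost_def by blast
  obtain \<gamma>0 where g0: "\<gamma>0 \<in> couplings \<Omega> \<mu> \<nu>" using approx[OF \<Omega>b bd mu nu, of 1] by auto
  have Sne: "S \<noteq> {}"
  proof -
    have "(\<lambda>_. 0::real) \<in> Cb \<Omega>" unfolding Cb_def by (auto simp: bounded_iff)
    then have "(\<integral>x. 0 \<partial>\<mu>) - (\<integral>x. 0 \<partial>\<nu>) \<in> S" unfolding S_def by fastforce
    then show ?thesis by blast
  qed
  have Sbdd: "bdd_above S" using up g0 unfolding bdd_above_def by blast
  have cbdd: "bdd_below (cost ` couplings \<Omega> \<mu> \<nu>)"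
    unfolding cost_def bdd_below_def by (auto intro!: exI[of _ 0] integral_nonneg_AE)
  have cne: "couplings \<Omega> \<mu> \<nu> \<noteq> {}" using g0 by blast
  have le1: "Sup S \<le> W1 \<Omega> \<mu> \<nu>"
    unfolding W
  proof (rule cINF_greatest[OF cne])
    fix \<gamma> assume "\<gamma> \<in> couplings \<Omega> \<mu> \<nu>"
    then show "Sup S \<le> cost \<gamma>" using up by (intro cSup_least[OF Sne]) auto
  qed
  have le2: "W1 \<Omega> \<mu> \<nu> \<le> Sup S"
  proof (rule field_le_epsilon)
    fix e :: real assume e: "e > 0"
    obtain \<gamma> \<phi> where gc: "\<gamma> \<in> couplings \<Omega> \<mu> \<nu>" and phiC: "\<phi> \<in> Cb \<Omega>"
      and lip: "\<forall>x y. \<phi> x - \<phi> y \<le> norm (x - y)"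
      and c: "cost \<gamma> \<le> ((\<integral>x. \<phi> x \<partial>\<mu>) - (\<integral>x. \<phi> x \<partial>\<nu>)) + e"
      using approx[OF \<Omega>b bd mu nu e] unfolding cost_def by blast
    have "(\<integral>x. \<phi> x \<partial>\<mu>) - (\<integral>x. \<phi> x \<partial>\<nu>) \<in> S" unfolding S_def using phiC lip by blast
    then have "(\<integral>x. \<phi> x \<partial>\<mu>) - (\<integral>x. \<phi> x \<partial>\<nu>) \<le> Sup S" by (rule cSup_upper[OF _ Sbdd])
    moreover have "W1 \<Omega> \<mu> \<nu> \<le> cost \<gamma>" unfolding W by (rule cINF_lower[OF cbdd gc])
    ultimately show "W1 \<Omega> \<mu> \<nu> \<le> Sup S + e" using c by linarith
  qed
  show ?thesis using le1 le2 unfolding S_def by linarith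
qed

end
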